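(* Let $T$ be a tree of order at least $2$ with support vertices $v_1,\dots,v_s$, where $v_i$ is adjacent to exactly $\ell_i$ leaves. Then there exists an ISTDF $f$ of $T$ of weight $\gamma^{0}_{st}(T)$ such that, for every $i\in\{1,\dots,s\}$, $f$ assigns the value $1$ to at least $\lfloor \ell_i/2\rfloor$ of the leaves adjacent to $v_i$.
   Context: For a vertex $v$ of a graph $G=(V,E)$, $N(v)$ is its open neighborhood, and for $f:V\to\mathbb{R}$ and $B\subseteq V$ write $f(B)=\sum_{v\in B}f(v)$; $f(V)$ is the weight of $f$. An inverse signed total dominating function (ISTDF) of $G$ is a function $f:V\to\{-1,1\}$ such that $f(N(v))\le 0$ for every $v\in V$. The inverse signed total domination number $\gamma^{0}_{st}(G)$ is the maximum weight of an ISTDF of $G$. A leaf of a tree is a vertex of degree $1$; a support vertex is a vertex adjacent to at least one leaf. *)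

theory Defs
  imports Main
begin

definition simple_graph :: "'a set \<Rightarrow> ('a \<Rightarrow> 'a \<Rightarrow> bool) \<Rightarrow> bool" where
  "simple_graph V E \<longleftrightarrow> finite V \<and> (\<forall>u v. E u v \<longrightarrow> u \<in> V \<and> v \<in> V)
     \<and> (\<forall>u v. E u v \<longrightarrow> E v u) \<and> (\<forall>v. \<not> E v v)"

definition edges :: "'a set \<Rightarrow> ('a \<Rightarrow> 'a \<Rightarrow> bool) \<Rightarrow> 'a set set" where
  "edges V E = {{u, v} | u v. u \<in> V \<and> v \<in> V \<and> E u v}"

definition connected_graph :: "'a set \<Rightarrow> ('a \<Rightarrow> 'a \<Rightarrow> bool) \<Rightarrow> bool" where
  "connected_graph V E \<longleftrightarrow> (\<forall>u\<in>V. \<forall>v\<in>V. (\<lambda>x y. E x y)\<^sup>*\<^sup>* u v)"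

definition is_tree :: "'a set \<Rightarrow> ('a \<Rightarrow> 'a \<Rightarrow> bool) \<Rightarrow> bool" where
  "is_tree V E \<longleftrightarrow> simple_graph V E \<and> V \<noteq> {} \<and> connected_graph V E
     \<and> card (edges V E) = card V - 1"

definition nbhd :: "'a set \<Rightarrow> ('a \<Rightarrow> 'a \<Rightarrow> bool) \<Rightarrow> 'a \<Rightarrow> 'a set" where
  "nbhd V E v = {u \<in> V. E v u}"

definition is_leaf :: "'a set \<Rightarrow> ('a \<Rightarrow> 'a \<Rightarrow> bool) \<Rightarrow> 'a \<Rightarrow> bool" where
  "is_leaf V E v \<longleftrightarrow> v \<in> V \<and> card (nbhd V E v) = 1"

definition leaves_at :: "'a set \<Rightarrow> ('a \<Rightarrow> 'a \<Rightarrow> bool) \<Rightarrow> 'a \<Rightarrow> 'a set" where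
  "leaves_at V E v = {u \<in> nbhd V E v. is_leaf V E u}"

definition is_support :: "'a set \<Rightarrow> ('a \<Rightarrow> 'a \<Rightarrow> bool) \<Rightarrow> 'a \<Rightarrow> bool" where
  "is_support V E v \<longleftrightarrow> v \<in> V \<and> leaves_at V E v \<noteq> {}"

definition is_istdf :: "'a set \<Rightarrow> ('a \<Rightarrow> 'a \<Rightarrow> bool) \<Rightarrow> ('a \<Rightarrow> int) \<Rightarrow> bool" where
  "is_istdf V E f \<longleftrightarrow> (\<forall>v\<in>V. f v = -1 \<or> f v = 1)
     \<and> (\<forall>v\<in>V. (\<Sum>u\<in>nbhd V E v. f u) \<le> 0)"

definition weight :: "'a set \<Rightarrow> ('a \<Rightarrow> int) \<Rightarrow> int" where
  "weight V f = (\<Sum>v\<in>V. f v)"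

definition istd_number :: "'a set \<Rightarrow> ('a \<Rightarrow> 'a \<Rightarrow> bool) \<Rightarrow> int" where
  "istd_number V E = Max {weight V f | f. is_istdf V E f}"

end

theory Submission
  imports Defs
begin

lemma sum_upd_in:
  fixes f :: "'a \<Rightarrow> int"
  assumes "finite S" "u \<in> S"
  shows "sum (f(u:=a)) S = sum f S - f u + a"
proof -
  have "sum (f(u:=a)) S = (f(u:=a)) u + sum (f(u:=a)) (S - {u})"
    using assms by (simp add: sum.remove)
  also have "sum (f(u:=a)) (S - {u}) = sum f (S - {u})"
    by (rule sum.cong) auto
  also have "sum f S = f u + sum f (S - {u})" using assms by (simp add: sum.remove)
  ultimately show ?thesis by simp
qed

lemma sum_upd_notin:
  fixes f :: "'a \<Rightarrow> int"
  assumes "u \<notin> S"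
  shows "sum (f(u:=a)) S = sum f S"
  using assms by (intro sum.cong) auto

theorem lemma4p2:
  fixes V :: "'a set" and E :: "'a \<Rightarrow> 'a \<Rightarrow> bool"
  assumes "is_tree V E" and "card V \<ge> 2"
  shows "\<exists>f. is_istdf V E f \<and> weight V f = istd_number V E
           \<and> (\<forall>v. is_support V E v \<longrightarrow>
                 card {u \<in> leaves_at V E v. f u = 1} \<ge> card (leaves_at V E v) div 2)"
proof -
  have sg: "simple_graph V E" using assms(1) unfolding is_tree_def by blast
  hence finV: "finite V" and inV: "\<And>u v. E u v \<Longrightarrow> u \<in> V \<and> v \<in> V"
    and symE: "\<And>u v. E u v \<Longrightarrow> E v u" unfolding simple_graph_def by blast+
  have nbV: "nbhd V E x \<subseteq> V" for x unfolding nbhd_def by auto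
  have finN: "finite (nbhd V E x)" for x using nbV finV finite_subset by blast
  define W where "W = {weight V f | f. is_istdf V E f}"
  have wb: "\<bar>weight V f\<bar> \<le> int (card V)" if "is_istdf V E f" for f
  proof -
    have "\<bar>weight V f\<bar> \<le> (\<Sum>v\<in>V. \<bar>f v\<bar>)" unfolding weight_def by (rule sum_abs)
    also have "\<dots> = (\<Sum>v\<in>V. 1)" using that unfolding is_istdf_def by (intro sum.cong) auto
    finally show ?thesis by simp
  qed
  have "W \<subseteq> {- int (card V) .. int (card V)}" unfolding W_def using wb by fastforce
  hence finW: "finite W" by (rule finite_subset) simp
  have "is_istdf V E (\<lambda>_. -1)" unfolding is_istdf_def by simp
  hence neW: "W \<noteq> {}" unfolding W_def by blast
  have wle: "weight V g \<le> istd_number V E" if "is_istdf V E g" for g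
    unfolding istd_number_def using that finW by (intro Max_ge) (auto simp: W_def)
  have "istd_number V E \<in> W" unfolding istd_number_def W_def[symmetric] using finW neW by (rule Max_in)
  hence "\<exists>f0. is_istdf V E f0 \<and> weight V f0 = istd_number V E" unfolding W_def by (smt (verit) mem_Collect_eq)
  then obtain f0 where f0: "is_istdf V E f0" "weight V f0 = istd_number V E" by blast
  define L where "L = {u \<in> V. is_leaf V E u}"
  define cnt where "cnt g = card {u \<in> L. g u = (1::int)}" for g :: "'a \<Rightarrow> int"
  define P where "P g \<longleftrightarrow> is_istdf V E g \<and> weight V g = istd_number V E" for g
  have "\<exists>f. P f \<and> (\<forall>g. P g \<longrightarrow> cnt g \<le> cnt f)"
  proof (rule ex_has_greatest_nat[where b = "Suc (card V)"])
    show "P f0" using f0 unfolding P_def by blast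
    show "\<forall>g. P g \<longrightarrow> cnt g < Suc (card V)"
    proof (intro allI impI)
      fix g have "cnt g \<le> card V" unfolding cnt_def L_def using finV by (intro card_mono) auto
      thus "cnt g < Suc (card V)" by simp
    qed
  qed
  then obtain f where Pf: "P f" and fmax: "\<And>g. P g \<Longrightarrow> cnt g \<le> cnt f" by blast
  have fi: "is_istdf V E f" and fw: "weight V f = istd_number V E" using Pf unfolding P_def by auto
  have fpm: "\<And>x. x \<in> V \<Longrightarrow> f x = -1 \<or> f x = 1" and fs: "\<And>x. x \<in> V \<Longrightarrow> sum f (nbhd V E x) \<le> 0"
    using fi unfolding is_istdf_def by auto
  show ?thesis
  proof (intro exI conjI allI impI)
    show "is_istdf V E f" by fact
    show "weight V f = istd_number V E" by fact
    fix v assume sv: "is_support V E v"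
    hence vV: "v \<in> V" unfolding is_support_def by blast
    define A where "A = leaves_at V E v"
    define Pos where "Pos = {u \<in> A. f u = 1}"
    define Neg where "Neg = {u \<in> A. f u = -1}"
    have AN: "A \<subseteq> nbhd V E v" unfolding A_def leaves_at_def by auto
    have finA: "finite A" using AN finN finite_subset by blast
    have AV: "A \<subseteq> V" using AN nbV by blast
    have PN: "A = Pos \<union> Neg" "Pos \<inter> Neg = {}" unfolding Pos_def Neg_def using AV fpm by auto
    have cA: "card A = card Pos + card Neg" using PN finA
      by (metis card_Un_disjoint finite_Un)
    show "card {u \<in> leaves_at V E v. f u = 1} \<ge> card (leaves_at V E v) div 2"
    proof (rule ccontr)
      assume "\<not> ?thesis"
      hence lt: "card Pos < card A div 2" unfolding Pos_def A_def by simp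
      hence gap: "card Neg \<ge> card Pos + 2" using cA by linarith
      hence "Neg \<noteq> {}" by auto
      then obtain u where uN: "u \<in> Neg" by blast
      have uA: "u \<in> A" and fu: "f u = -1" using uN Neg_def by auto
      have uV: "u \<in> V" using uA AV by blast
      have Evu: "E v u" using uA AN unfolding nbhd_def by auto
      have uleaf: "is_leaf V E u" using uA unfolding A_def leaves_at_def by auto
      have nu: "nbhd V E u = {v}"
      proof -
        have "v \<in> nbhd V E u" using symE[OF Evu] vV unfolding nbhd_def by auto
        moreover have "card (nbhd V E u) = 1" using uleaf unfolding is_leaf_def by blast
        ultimately show ?thesis by (metis card_1_singletonE singletonD)
      qed
      have onlyv: "x = v" if "u \<in> nbhd V E x" for x
      proof -
        have "E x u" using that unfolding nbhd_def by auto
        hence "x \<in> nbhd V E u" using symE inV unfolding nbhd_def by auto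
        thus ?thesis using nu by auto
      qed
      have uL: "u \<in> L" using uleaf uV L_def by auto
      have sA: "sum f A = int (card Pos) - int (card Neg)"
      proof -
        have "sum f A = sum f Pos + sum f Neg" using PN finA by (simp add: sum.union_disjoint)
        also have "sum f Pos = int (card Pos)" unfolding Pos_def by simp
        also have "sum f Neg = - int (card Neg)" unfolding Neg_def by simp
        finally show ?thesis by simp
      qed
      have split: "sum f (nbhd V E v) = sum f A + sum f (nbhd V E v - A)"
        using AN finN by (metis add.commute sum.subset_diff)
      show False
      proof (cases "\<exists>w \<in> nbhd V E v - A. f w = 1")
        case True
        then obtain w where wN: "w \<in> nbhd V E v" and wA: "w \<notin> A" and fw1: "f w = 1" by blast
        have wV: "w \<in> V" using wN nbV by blast
        have wu: "w \<noteq> u" using wA uA by blast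
        have wL: "w \<notin> L"
        proof
          assume "w \<in> L" hence "is_leaf V E w" using L_def by auto
          hence "w \<in> A" using wN unfolding A_def leaves_at_def by auto
          thus False using wA by blast
        qed
        define g where "g = f(u := 1, w := -1)"
        have gi: "is_istdf V E g"
          unfolding is_istdf_def
        proof (intro conjI ballI)
          fix x assume "x \<in> V" thus "g x = -1 \<or> g x = 1" using fpm g_def by auto
        next
          fix x assume xV: "x \<in> V"
          show "sum g (nbhd V E x) \<le> 0"
          proof (cases "u \<in> nbhd V E x")
            case True
            hence xv: "x = v" using onlyv by blast
            have wNx: "w \<in> nbhd V E x" using wN xv by simp
            have a: "sum (f(u:=1)) (nbhd V E x) = sum f (nbhd V E x) - f u + 1"
              by (rule sum_upd_in[OF finN True])
            have b: "sum ((f(u:=1))(w:=-1)) (nbhd V E x) = sum (f(u:=1)) (nbhd V E x) - (f(u:=1)) w + -1"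
              by (rule sum_upd_in[OF finN wNx])
            have "sum g (nbhd V E x) = sum f (nbhd V E x) - f u + 1 - 1 + (-1)"
              unfolding g_def using a b wu fw1 by simp
            thus ?thesis using fs[OF xV] fu by simp
          next
            case False
            have "sum g (nbhd V E x) \<le> sum f (nbhd V E x)"
              unfolding g_def using False fw1 fpm by (intro sum_mono) auto
            thus ?thesis using fs[OF xV] by simp
          qed
        qed
        have a: "sum (f(u:=1)) V = sum f V - f u + 1"
          by (rule sum_upd_in[OF finV uV])
        have b: "sum ((f(u:=1))(w:=-1)) V = sum (f(u:=1)) V - (f(u:=1)) w + -1"
          by (rule sum_upd_in[OF finV wV])
        have "weight V g = weight V f - f u + 1 - 1 + (-1)"
          unfolding g_def weight_def using a b wu fw1 by simp
        hence "weight V g = weight V f" using fu by simp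
        hence "P g" using gi fw unfolding P_def by simp
        hence le: "cnt g \<le> cnt f" by (rule fmax)
        have "{x \<in> L. g x = 1} = insert u {x \<in> L. f x = 1}"
          unfolding g_def using wL uL wu by auto
        moreover have "u \<notin> {x \<in> L. f x = 1}" using fu by auto
        moreover have "finite {x \<in> L. f x = 1}" using finV L_def by auto
        ultimately have "cnt g = cnt f + 1" unfolding cnt_def by simp
        thus False using le by simp
      next
        case False
        have "sum f (nbhd V E v - A) \<le> 0"
        proof (rule sum_nonpos)
          fix x assume "x \<in> nbhd V E v - A"
          thus "f x \<le> 0" using False fpm nbV by fastforce
        qed
        hence sv2: "sum f (nbhd V E v) \<le> -2" using split sA gap by linarith
        define g where "g = f(u := 1)"
        have gi: "is_istdf V E g"
          unfolding is_istdf_def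
        proof (intro conjI ballI)
          fix x assume "x \<in> V" thus "g x = -1 \<or> g x = 1" using fpm g_def by auto
        next
          fix x assume xV: "x \<in> V"
          show "sum g (nbhd V E x) \<le> 0"
          proof (cases "u \<in> nbhd V E x")
            case True
            hence xv: "x = v" using onlyv by blast
            have "sum g (nbhd V E x) = sum f (nbhd V E x) - f u + 1"
              unfolding g_def by (rule sum_upd_in[OF finN True])
            thus ?thesis using sv2 fu xv by simp
          next
            case False
            thus ?thesis unfolding g_def using fs[OF xV] sum_upd_notin[OF False, of f 1] by simp
          qed
        qed
        have "weight V g = weight V f - f u + 1"
          unfolding g_def weight_def by (rule sum_upd_in[OF finV uV])
        hence "weight V g > istd_number V E" using fu fw by simp
        thus False using wle[OF gi] by simp
      qed
    qed
  qed
qed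

end
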